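(* Let $K>1$, $\mathcal{Y}=\{1,\dots,K\}$, and let $(X,Y,M)$ be distributed on $\mathcal{X}\times\mathcal{Y}\times\mathcal{Y}$. Define the asymmetric softmax $\tilde{\bm{\psi}}:\mathbb{R}^{K+1}\to\mathbb{R}^{K+1}$ by $\tilde{\psi}_y(\bm{u})=\exp(u_y)/\sum_{y'=1}^{K}\exp(u_{y'})$ for $1\le y\le K$ and $\tilde{\psi}_{K+1}(\bm{u})=\exp(u_{K+1})/\big(\sum_{y'=1}^{K+1}\exp(u_{y'})-\max_{y'\le K}\exp(u_{y'})\big)$, and the surrogate $$L_{\tilde{\psi}}(\bm{u},y,m)=-\log\tilde{\psi}_y(\bm{u})-[\![m\ne y]\!]\log\big(1-\tilde{\psi}_{K+1}(\bm{u})\big)-[\![m=y]\!]\log\tilde{\psi}_{K+1}(\bm{u}).$$ Let $R_{L_{\tilde{\psi}}}(\bm{g})=\mathbb{E}[L_{\tilde{\psi}}(\bm{g}(X),Y,M)]$ for measurable $\bm{g}:\mathcal{X}\to\mathbb{R}^{K+1}$. Then: (1) (consistency) for every $\bm{g}^*\in\mathop{\rm argmin}_{\bm{g}}R_{L_{\tilde{\psi}}}(\bm{g})$, the decision rule $\varphi\circ\bm{g}^*$ minimizes the 0-1-deferral risk $R^{\bot}_{01}(f)=\mathbb{E}[\ell^{\bot}_{01}(f(X),Y,M)]$ over all $f:\mathcal{X}\to\mathcal{Y}\cup\{\bot\}$; (2) the estimator $\hat{\bm{\eta}}^{\tilde{\psi}}=\tilde{\bm{\psi}}$ satisfies $\tilde{\bm{\psi}}(\bm{g}^*(\bm{x}))=[\bm{\eta}(\bm{x});\Pr(M=Y\mid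 X=\bm{x})]$ for all $\bm{x}\in\mathcal{X}$; (3) any other probability estimator for $L_{\tilde{\psi}}$ is necessarily bounded.
   Context: $\bm{\eta}(\bm{x})=(\Pr(Y=y\mid X=\bm{x}))_{y=1}^K$. The 0-1-deferral loss is $\ell^{\bot}_{01}(f(\bm{x}),y,m)=[\![f(\bm{x})\in\mathcal{Y},\ f(\bm{x})\ne y]\!]+[\![f(\bm{x})=\bot,\ m\ne y]\!]$, where $\bot$ denotes deferral to the expert whose prediction is $M$. The map $\varphi:\mathbb{R}^{K+1}\to\mathcal{Y}\cup\{\bot\}$ is $\varphi(\bm{u})=\bot$ if $u_{K+1}>\max_{y\le K}u_y$ and $\varphi(\bm{u})=\mathop{\rm argmax}_{y\le K}u_y$ otherwise. A probability estimator for a surrogate $L$ is a map $\hat{\bm{\eta}}:\mathbb{R}^{K+1}\to\mathbb{R}^{K+1}$ such that for every distribution and every minimizer $\bm{g}^*$ of the surrogate risk, $\hat{\bm{\eta}}(\bm{g}^*(\bm{x}))=[\bm{\eta}(\bm{x});\Pr(M=Y\mid X=\bm{x})]$. *)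

theory Defs
  imports "HOL-Probability.Probability"
begin

text \<open>Labels are 1..K; score vectors in R^(K+1) are functions nat => real on indices 1..K+1;
  decisions in Y \<union> {deferral} are nat option, with None = deferral.\<close>

definition asym_softmax :: "nat \<Rightarrow> (nat \<Rightarrow> real) \<Rightarrow> nat \<Rightarrow> real" where
  "asym_softmax K u i =
     (if i \<in> {1..K} then exp (u i) / (\<Sum>y'=1..K. exp (u y'))
      else if i = K + 1 then
        exp (u (K+1)) / ((\<Sum>y'=1..K+1. exp (u y')) - Max ((\<lambda>y'. exp (u y')) ` {1..K}))
      else 0)"

definition surr_loss :: "nat \<Rightarrow> (nat \<Rightarrow> real) \<Rightarrow> nat \<Rightarrow> nat \<Rightarrow> real" where
  "surr_loss K u y m =
     - ln (asym_softmax K u y)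
     - of_bool (m \<noteq> y) * ln (1 - asym_softmax K u (K+1))
     - of_bool (m = y) * ln (asym_softmax K u (K+1))"

text \<open>The map phi; ties in the argmax are broken towards the smallest label.\<close>
definition defer_decision :: "nat \<Rightarrow> (nat \<Rightarrow> real) \<Rightarrow> nat option" where
  "defer_decision K u =
     (if u (K+1) > Max (u ` {1..K}) then None
      else Some (LEAST y. y \<in> {1..K} \<and> (\<forall>y'\<in>{1..K}. u y' \<le> u y)))"

definition loss01_defer :: "nat option \<Rightarrow> nat \<Rightarrow> nat \<Rightarrow> real" where
  "loss01_defer f y m = of_bool (f \<noteq> None \<and> f \<noteq> Some y) + of_bool (f = None \<and> m \<noteq> y)"

text \<open>A distribution of (X,Y,M): marginal mu of X and conditional law D x of (Y,M) given X = x.\<close>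
definition valid_dist :: "nat \<Rightarrow> 'x measure \<Rightarrow> ('x \<Rightarrow> (nat \<times> nat) pmf) \<Rightarrow> bool" where
  "valid_dist K \<mu> D \<longleftrightarrow> prob_space \<mu> \<and> (\<forall>x. set_pmf (D x) \<subseteq> {1..K} \<times> {1..K})
     \<and> (\<forall>y m. (\<lambda>x. pmf (D x) (y, m)) \<in> borel_measurable \<mu>)"

definition surr_risk :: "nat \<Rightarrow> 'x measure \<Rightarrow> ('x \<Rightarrow> (nat \<times> nat) pmf) \<Rightarrow> ('x \<Rightarrow> nat \<Rightarrow> real) \<Rightarrow> ennreal" where
  "surr_risk K \<mu> D g =
     (\<integral>\<^sup>+ x. (\<integral>\<^sup>+ ym. ennreal (surr_loss K (g x) (fst ym) (snd ym)) \<partial>measure_pmf (D x)) \<partial>\<mu>)"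

definition risk01 :: "'x measure \<Rightarrow> ('x \<Rightarrow> (nat \<times> nat) pmf) \<Rightarrow> ('x \<Rightarrow> nat option) \<Rightarrow> ennreal" where
  "risk01 \<mu> D f =
     (\<integral>\<^sup>+ x. (\<integral>\<^sup>+ ym. ennreal (loss01_defer (f x) (fst ym) (snd ym)) \<partial>measure_pmf (D x)) \<partial>\<mu>)"

definition meas_score :: "nat \<Rightarrow> 'x measure \<Rightarrow> ('x \<Rightarrow> nat \<Rightarrow> real) \<Rightarrow> bool" where
  "meas_score K \<mu> g \<longleftrightarrow> (\<forall>i\<in>{1..K+1}. (\<lambda>x. g x i) \<in> borel_measurable \<mu>)"

definition surr_minimizer :: "nat \<Rightarrow> 'x measure \<Rightarrow> ('x \<Rightarrow> (nat \<times> nat) pmf) \<Rightarrow> ('x \<Rightarrow> nat \<Rightarrow> real) \<Rightarrow> bool" where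
  "surr_minimizer K \<mu> D g \<longleftrightarrow> meas_score K \<mu> g \<and>
     (\<forall>h. meas_score K \<mu> h \<longrightarrow> surr_risk K \<mu> D g \<le> surr_risk K \<mu> D h)"

definition target :: "nat \<Rightarrow> ('x \<Rightarrow> (nat \<times> nat) pmf) \<Rightarrow> 'x \<Rightarrow> nat \<Rightarrow> real" where
  "target K D x i =
     (if i \<in> {1..K} then measure_pmf.prob (D x) {(y, m). y = i}
      else if i = K + 1 then measure_pmf.prob (D x) {(y, m). m = y}
      else 0)"

definition prob_estimator :: "nat \<Rightarrow> 'x measure \<Rightarrow> ((nat \<Rightarrow> real) \<Rightarrow> nat \<Rightarrow> real) \<Rightarrow> bool" where
  "prob_estimator K \<Omega> est \<longleftrightarrow>
     (\<forall>\<nu> D g. sets \<nu> = sets \<Omega> \<and> valid_dist K \<nu> D \<and> surr_minimizer K \<nu> D g \<longrightarrow>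
        (AE x in \<nu>. \<forall>i\<in>{1..K+1}. est (g x) i = target K D x i))"

end

theory Submission imports Defs begin

lemma other_idx:
  assumes "K > (1::nat)" "y0 \<in> {1..K}"
  obtains y1 where "y1 \<in> {1..K}" "y1 \<noteq> y0"
proof -
  show ?thesis using assms by (intro that[of "if y0 = 1 then 2 else 1"]) auto
qed

lemma S_minus_M_pos:
  fixes v :: "nat \<Rightarrow> real"
  assumes "K > 1"
  shows "0 < (\<Sum>y\<in>{1..K}. exp (v y)) - Max ((\<lambda>y. exp (v y)) ` {1..K})"
proof -
  have ne: "(\<lambda>y. exp (v y)) ` {1..K} \<noteq> {}" using assms by auto
  obtain y0 where y0: "y0 \<in> {1..K}" "Max ((\<lambda>y. exp (v y)) ` {1..K}) = exp (v y0)"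
    using Max_in[OF _ ne] by auto
  obtain y1 where y1: "y1 \<in> {1..K}" "y1 \<noteq> y0" using other_idx[OF assms y0(1)] by blast
  have "(\<Sum>y\<in>{y0,y1}. exp (v y)) \<le> (\<Sum>y\<in>{1..K}. exp (v y))"
    using y0 y1 by (intro sum_mono2) auto
  moreover have "(\<Sum>y\<in>{y0,y1}. exp (v y)) = exp (v y0) + exp (v y1)" using y1 by simp
  ultimately show ?thesis using y0 by (smt (verit) exp_gt_zero)
qed

lemma sm_last_eq:
  "asym_softmax K v (K+1) = exp (v (K+1)) / (exp (v (K+1)) +
     ((\<Sum>y\<in>{1..K}. exp (v y)) - Max ((\<lambda>y. exp (v y)) ` {1..K})))"
  unfolding asym_softmax_def by (simp add: add.commute)

lemma sm_basic:
  fixes v :: "nat \<Rightarrow> real"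
  assumes "K > 1"
  shows sm_pos: "y \<in> {1..K} \<Longrightarrow> 0 < asym_softmax K v y"
    and sm_sum: "(\<Sum>y\<in>{1..K}. asym_softmax K v y) = 1"
    and sm_last_pos: "0 < asym_softmax K v (K+1)"
    and sm_last_lt1: "asym_softmax K v (K+1) < 1"
proof -
  have Spos: "0 < (\<Sum>y\<in>{1..K}. exp (v y))" using assms by (intro sum_pos) auto
  show "y \<in> {1..K} \<Longrightarrow> 0 < asym_softmax K v y"
    using Spos unfolding asym_softmax_def by simp
  have "(\<Sum>y\<in>{1..K}. asym_softmax K v y) = (\<Sum>y\<in>{1..K}. exp (v y) / (\<Sum>y'\<in>{1..K}. exp (v y')))"
    by (rule sum.cong) (auto simp: asym_softmax_def)
  also have "\<dots> = 1" using Spos by (simp add: sum_divide_distrib[symmetric])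
  finally show "(\<Sum>y\<in>{1..K}. asym_softmax K v y) = 1" .
  have d: "0 < (\<Sum>y\<in>{1..K}. exp (v y)) - Max ((\<lambda>y. exp (v y)) ` {1..K})"
    by (rule S_minus_M_pos[OF assms])
  show "0 < asym_softmax K v (K+1)" unfolding sm_last_eq using d exp_gt_zero[of "v (K+1)"]
    by (intro divide_pos_pos) linarith+
  show "asym_softmax K v (K+1) < 1" unfolding sm_last_eq using d exp_gt_zero[of "v (K+1)"]
    by (smt (verit) divide_less_eq_1_pos)
qed

definition Dv :: "real \<Rightarrow> real \<Rightarrow> real" where
  "Dv a b = a * ln a - a * ln b - a + b"

lemma Dv_nonneg: assumes "0 \<le> a" "0 < b" shows "0 \<le> Dv a b"
proof (cases "a = 0")
  case True then show ?thesis using assms by (simp add: Dv_def)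
next
  case False
  then have a: "0 < a" using assms by simp
  have "ln (b / a) \<le> b / a - 1" using a assms by (intro ln_le_minus_one) simp
  then have "a * ln (b / a) \<le> a * (b / a - 1)" using a by (intro mult_left_mono) auto
  then have "a * (ln b - ln a) \<le> b - a" using a assms by (simp add: ln_div right_diff_distrib)
  then show ?thesis unfolding Dv_def by (simp add: algebra_simps)
qed

lemma Dv_zero: assumes "0 \<le> a" "0 < b" "Dv a b = 0" shows "a = b"
proof (cases "a = 0")
  case True then show ?thesis using assms by (simp add: Dv_def)
next
  case False
  then have a: "0 < a" using assms by simp
  have "a * (ln b - ln a) = b - a" using assms(3) unfolding Dv_def by (simp add: algebra_simps)
  then have "a * ln (b / a) = a * (b / a - 1)" using a assms by (simp add: ln_div right_diff_distrib)
  then have "ln (b / a) = b / a - 1" using a by simp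
  then have "b / a = 1" using a assms by (intro ln_eq_minus_one) auto
  then show ?thesis using a by simp
qed

lemma Dv_half: assumes "0 \<le> a" "0 < b" shows "Dv a ((a + b) / 2) \<le> Dv a b / 2"
proof (cases "a = 0")
  case True then show ?thesis using assms by (simp add: Dv_def)
next
  case False
  then have a: "0 < a" using assms by simp
  have sq: "0 \<le> (a - b) * (a - b)" by simp
  have "a * b \<le> ((a + b) / 2)^2" using sq unfolding power2_eq_square by (simp add: algebra_simps field_simps)
  then have "ln (a * b) \<le> ln (((a + b) / 2)^2)" using a assms by (intro ln_mono) auto
  then have "ln a + ln b \<le> 2 * ln ((a + b) / 2)" using a assms by (simp add: ln_mult ln_realpow)
  then have "a * (ln a + ln b) \<le> a * (2 * ln ((a + b) / 2))" using a by (intro mult_left_mono) auto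
  then have "a * ln a + a * ln b \<le> 2 * (a * ln ((a + b) / 2))" by (simp add: algebra_simps)
  then show ?thesis unfolding Dv_def by (simp add: field_simps)
qed

definition etaP :: "nat \<Rightarrow> (nat \<times> nat) pmf \<Rightarrow> nat \<Rightarrow> real" where
  "etaP K \<pi> y = (\<Sum>m\<in>{1..K}. pmf \<pi> (y, m))"
definition ppP :: "nat \<Rightarrow> (nat \<times> nat) pmf \<Rightarrow> real" where
  "ppP K \<pi> = (\<Sum>y\<in>{1..K}. pmf \<pi> (y, y))"
definition crP :: "nat \<Rightarrow> (nat \<times> nat) pmf \<Rightarrow> (nat \<Rightarrow> real) \<Rightarrow> real" where
  "crP K \<pi> v = (\<Sum>y\<in>{1..K}. \<Sum>m\<in>{1..K}. pmf \<pi> (y, m) * surr_loss K v y m)"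
definition CstP :: "nat \<Rightarrow> (nat \<times> nat) pmf \<Rightarrow> real" where
  "CstP K \<pi> = - (\<Sum>y\<in>{1..K}. etaP K \<pi> y * ln (etaP K \<pi> y))
     - (1 - ppP K \<pi>) * ln (1 - ppP K \<pi>) - ppP K \<pi> * ln (ppP K \<pi>)"
definition DsP :: "nat \<Rightarrow> (nat \<times> nat) pmf \<Rightarrow> (nat \<Rightarrow> real) \<Rightarrow> real" where
  "DsP K \<pi> v = (\<Sum>y\<in>{1..K}. Dv (etaP K \<pi> y) (asym_softmax K v y))
     + Dv (1 - ppP K \<pi>) (1 - asym_softmax K v (K+1)) + Dv (ppP K \<pi>) (asym_softmax K v (K+1))"

lemma pmf_tot:
  fixes \<pi> :: "(nat \<times> nat) pmf"
  assumes "set_pmf \<pi> \<subseteq> {1..K} \<times> {1..K}"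
  shows "(\<Sum>y\<in>{1..K}. \<Sum>m\<in>{1..K}. pmf \<pi> (y, m)) = 1"
proof -
  have "(\<Sum>z\<in>{1..K} \<times> {1..K}. pmf \<pi> z) = 1" using assms by (intro sum_pmf_eq_1) (auto intro: finite_SigmaI)
  then show ?thesis by (simp add: sum.cartesian_product)
qed

lemma eta_sum: "set_pmf \<pi> \<subseteq> {1..K} \<times> {1..K} \<Longrightarrow> (\<Sum>y\<in>{1..K}. etaP K \<pi> y) = 1"
  unfolding etaP_def by (rule pmf_tot)

lemma eta_nonneg: "0 \<le> etaP K \<pi> y"
  unfolding etaP_def by (intro sum_nonneg) auto

lemma pp_nonneg: "0 \<le> ppP K \<pi>"
  unfolding ppP_def by (intro sum_nonneg) auto

lemma diag_sum: "(\<Sum>y\<in>{1..K}. \<Sum>m\<in>{1..K}. pmf \<pi> (y, m) * of_bool (m = y)) = ppP K \<pi>"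
  unfolding ppP_def by (intro sum.cong refl) (simp add: of_bool_def if_distrib sum.delta cong: if_cong)

lemma pp_le1: assumes "set_pmf \<pi> \<subseteq> {1..K} \<times> {1..K}" shows "ppP K \<pi> \<le> 1"
proof -
  have "ppP K \<pi> \<le> (\<Sum>y\<in>{1..K}. \<Sum>m\<in>{1..K}. pmf \<pi> (y, m))"
    unfolding ppP_def by (intro sum_mono member_le_sum) auto
  then show ?thesis using pmf_tot[OF assms] by simp
qed

lemma offdiag_sum:
  assumes "set_pmf \<pi> \<subseteq> {1..K} \<times> {1..K}"
  shows "(\<Sum>y\<in>{1..K}. \<Sum>m\<in>{1..K}. pmf \<pi> (y, m) * of_bool (m \<noteq> y)) = 1 - ppP K \<pi>"
proof -
  have "(\<Sum>y\<in>{1..K}. \<Sum>m\<in>{1..K}. pmf \<pi> (y, m) * of_bool (m \<noteq> y)) =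
    (\<Sum>y\<in>{1..K}. \<Sum>m\<in>{1..K}. pmf \<pi> (y, m) - pmf \<pi> (y, m) * of_bool (m = y))"
    by (intro sum.cong refl) auto
  also have "\<dots> = 1 - ppP K \<pi>"
    using pmf_tot[OF assms] diag_sum by (simp add: sum_subtractf)
  finally show ?thesis .
qed

lemma sm_le1: assumes "K > 1" "y \<in> {1..K}" shows "asym_softmax K v y \<le> 1"
proof -
  have "asym_softmax K v y \<le> (\<Sum>y\<in>{1..K}. asym_softmax K v y)"
    using assms sm_pos[OF assms(1)] by (intro member_le_sum) (auto intro: less_imp_le)
  then show ?thesis using sm_sum[OF assms(1)] by simp
qed

lemma loss_nonneg: assumes "K > 1" "y \<in> {1..K}" shows "0 \<le> surr_loss K v y m"
proof -
  have a: "ln (asym_softmax K v y) \<le> 0" using sm_pos[OF assms(1) assms(2)] sm_le1[OF assms] by simp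
  have b: "ln (asym_softmax K v (K+1)) \<le> 0" using sm_last_pos[OF assms(1), of v] sm_last_lt1[OF assms(1), of v] by simp
  have c: "ln (1 - asym_softmax K v (K+1)) \<le> 0" using sm_last_pos[OF assms(1), of v] sm_last_lt1[OF assms(1), of v] by simp
  show ?thesis unfolding surr_loss_def using a b c by (auto simp: of_bool_def)
qed

lemma decomp:
  assumes K: "K > 1" and supp: "set_pmf \<pi> \<subseteq> {1..K} \<times> {1..K}"
  shows "crP K \<pi> v = CstP K \<pi> + DsP K \<pi> v"
proof -
  define s where "s = asym_softmax K v"
  define r where "r = s (K+1)"
  define p where "p = ppP K \<pi>"
  define e where "e = etaP K \<pi>"
  have "crP K \<pi> v = (\<Sum>y\<in>{1..K}. \<Sum>m\<in>{1..K}. pmf \<pi> (y, m) * (- ln (s y))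
      + (pmf \<pi> (y, m) * of_bool (m \<noteq> y)) * (- ln (1 - r))
      + (pmf \<pi> (y, m) * of_bool (m = y)) * (- ln r))"
    unfolding crP_def surr_loss_def s_def r_def by (intro sum.cong refl) (simp add: algebra_simps)
  also have "\<dots> = (\<Sum>y\<in>{1..K}. e y * (- ln (s y)))
      + (\<Sum>y\<in>{1..K}. \<Sum>m\<in>{1..K}. pmf \<pi> (y, m) * of_bool (m \<noteq> y)) * (- ln (1 - r))
      + (\<Sum>y\<in>{1..K}. \<Sum>m\<in>{1..K}. pmf \<pi> (y, m) * of_bool (m = y)) * (- ln r)"
  proof -
    have s1: "(\<Sum>y\<in>{1..K}. \<Sum>m\<in>{1..K}. pmf \<pi> (y, m) * (- ln (s y))) = (\<Sum>y\<in>{1..K}. e y * (- ln (s y)))"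
      unfolding e_def etaP_def by (simp only: sum_distrib_right)
    have s2: "(\<Sum>y\<in>{1..K}. \<Sum>m\<in>{1..K}. (pmf \<pi> (y, m) * of_bool (m \<noteq> y)) * (- ln (1 - r)))
       = (\<Sum>y\<in>{1..K}. \<Sum>m\<in>{1..K}. pmf \<pi> (y, m) * of_bool (m \<noteq> y)) * (- ln (1 - r))"
      by (simp only: sum_distrib_right)
    have s3: "(\<Sum>y\<in>{1..K}. \<Sum>m\<in>{1..K}. (pmf \<pi> (y, m) * of_bool (m = y)) * (- ln r))
       = (\<Sum>y\<in>{1..K}. \<Sum>m\<in>{1..K}. pmf \<pi> (y, m) * of_bool (m = y)) * (- ln r)"
      by (simp only: sum_distrib_right)
    show ?thesis using s1 s2 s3 by (simp only: sum.distrib)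
  qed
  also have "\<dots> = (\<Sum>y\<in>{1..K}. e y * (- ln (s y))) + (1 - p) * (- ln (1 - r)) + p * (- ln r)"
    using offdiag_sum[OF supp] diag_sum p_def by simp
  finally have cr: "crP K \<pi> v = (\<Sum>y\<in>{1..K}. e y * (- ln (s y))) + (1 - p) * (- ln (1 - r)) + p * (- ln r)" .
  have se: "(\<Sum>y\<in>{1..K}. e y) = 1" using eta_sum[OF supp] e_def by simp
  have ss: "(\<Sum>y\<in>{1..K}. s y) = 1" using sm_sum[OF K] s_def by simp
  have "(\<Sum>y\<in>{1..K}. Dv (e y) (s y)) = (\<Sum>y\<in>{1..K}. e y * ln (e y)) - (\<Sum>y\<in>{1..K}. e y * ln (s y))
     - (\<Sum>y\<in>{1..K}. e y) + (\<Sum>y\<in>{1..K}. s y)"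
    unfolding Dv_def by (simp add: sum.distrib sum_subtractf)
  then have ds: "(\<Sum>y\<in>{1..K}. Dv (e y) (s y)) = (\<Sum>y\<in>{1..K}. e y * ln (e y)) - (\<Sum>y\<in>{1..K}. e y * ln (s y))"
    using se ss by simp
  show ?thesis unfolding CstP_def DsP_def
    using cr ds unfolding s_def[symmetric] r_def[symmetric] p_def[symmetric] e_def[symmetric]
    by (simp add: Dv_def sum_negf algebra_simps)
qed

lemma DsP_terms:
  assumes K: "K > 1" and supp: "set_pmf \<pi> \<subseteq> {1..K} \<times> {1..K}"
  shows "\<forall>y\<in>{1..K}. 0 \<le> Dv (etaP K \<pi> y) (asym_softmax K v y)"
    and "0 \<le> Dv (1 - ppP K \<pi>) (1 - asym_softmax K v (K+1))"
    and "0 \<le> Dv (ppP K \<pi>) (asym_softmax K v (K+1))"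
  using Dv_nonneg eta_nonneg sm_pos[OF K] pp_le1[OF supp] pp_nonneg sm_last_pos[OF K, of v] sm_last_lt1[OF K, of v]
  by auto

lemma DsP_nonneg:
  assumes K: "K > 1" and supp: "set_pmf \<pi> \<subseteq> {1..K} \<times> {1..K}"
  shows "0 \<le> DsP K \<pi> v"
  unfolding DsP_def using DsP_terms[OF K supp, of v]
  by (intro add_nonneg_nonneg sum_nonneg) auto

lemma DsP_zero:
  assumes K: "K > 1" and supp: "set_pmf \<pi> \<subseteq> {1..K} \<times> {1..K}" and z: "DsP K \<pi> v = 0"
  shows "(\<forall>y\<in>{1..K}. asym_softmax K v y = etaP K \<pi> y) \<and> asym_softmax K v (K+1) = ppP K \<pi>"
proof -
  note T = DsP_terms[OF K supp, of v]
  have s0: "0 \<le> (\<Sum>y\<in>{1..K}. Dv (etaP K \<pi> y) (asym_softmax K v y))" using T by (intro sum_nonneg) auto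
  have z1: "(\<Sum>y\<in>{1..K}. Dv (etaP K \<pi> y) (asym_softmax K v y)) = 0"
   and z3: "Dv (ppP K \<pi>) (asym_softmax K v (K+1)) = 0"
    using z s0 T(2,3) unfolding DsP_def by linarith+
  have "\<forall>y\<in>{1..K}. Dv (etaP K \<pi> y) (asym_softmax K v y) = 0"
    using z1 T(1) by (subst (asm) sum_nonneg_eq_0_iff) auto
  then have "\<forall>y\<in>{1..K}. etaP K \<pi> y = asym_softmax K v y"
    using Dv_zero eta_nonneg sm_pos[OF K] by blast
  moreover have "ppP K \<pi> = asym_softmax K v (K+1)"
    using Dv_zero[OF pp_nonneg sm_last_pos[OF K] z3] .
  ultimately show ?thesis by auto
qed

definition rep :: "nat \<Rightarrow> (nat \<Rightarrow> real) \<Rightarrow> real \<Rightarrow> nat \<Rightarrow> real" where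
  "rep K q t i = (if i = K + 1 then ln (t * (1 - Max (q ` {1..K})) / (1 - t)) else ln (q i))"

lemma rep_sm:
  assumes K: "K > 1" and qpos: "\<forall>y\<in>{1..K}. 0 < q y" and qs: "(\<Sum>y\<in>{1..K}. q y) = 1"
    and t: "0 < t" "t < 1"
  shows "(\<forall>y\<in>{1..K}. asym_softmax K (rep K q t) y = q y) \<and> asym_softmax K (rep K q t) (K+1) = t"
proof -
  have ex: "\<forall>y\<in>{1..K}. exp (rep K q t y) = q y" using qpos by (auto simp: rep_def)
  have S: "(\<Sum>y\<in>{1..K}. exp (rep K q t y)) = 1" using qs ex by simp
  have M: "Max ((\<lambda>y. exp (rep K q t y)) ` {1..K}) = Max (q ` {1..K})"
    using ex by (intro arg_cong[where f=Max] image_cong) auto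
  have d: "0 < 1 - Max (q ` {1..K})" using S_minus_M_pos[OF K, of "rep K q t"] S M by simp
  define M' where "M' = Max (q ` {1..K})"
  have e: "exp (rep K q t (K+1)) = t * (1 - M') / (1 - t)"
    using d t by (simp add: rep_def M'_def)
  have "asym_softmax K (rep K q t) (K+1) = (t * (1 - M') / (1 - t)) / (t * (1 - M') / (1 - t) + (1 - M'))"
    unfolding sm_last_eq e S M M'_def ..
  also have "\<dots> = t"
  proof -
    have d': "0 < 1 - M'" using d M'_def by simp
    have "t * (1 - M') / (1 - t) + (1 - M') = (1 - M') / (1 - t)" using t by (simp add: field_simps)
    then show ?thesis using d' t by simp
  qed
  finally show ?thesis using ex S by (simp add: asym_softmax_def)
qed

lemma improve:
  fixes v :: "nat \<Rightarrow> real" and \<pi> :: "(nat \<times> nat) pmf"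
  assumes K: "K > 1" and supp: "set_pmf \<pi> \<subseteq> {1..K} \<times> {1..K}"
  defines "q \<equiv> (\<lambda>y. (asym_softmax K v y + etaP K \<pi> y) / 2)"
    and "t \<equiv> (asym_softmax K v (K+1) + ppP K \<pi>) / 2"
  shows "DsP K \<pi> (rep K q t) \<le> DsP K \<pi> v / 2"
proof -
  have qpos: "\<forall>y\<in>{1..K}. 0 < q y" unfolding q_def using sm_pos[OF K] eta_nonneg
    by (smt (verit) divide_pos_pos)
  have qs: "(\<Sum>y\<in>{1..K}. q y) = 1" unfolding q_def
    using sm_sum[OF K, of v] eta_sum[OF supp] by (simp add: sum_divide_distrib[symmetric] sum.distrib)
  have t: "0 < t" "t < 1" unfolding t_def using sm_last_pos[OF K, of v] sm_last_lt1[OF K, of v]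
      pp_nonneg[of K \<pi>] pp_le1[OF supp] by auto
  note R = rep_sm[OF K qpos qs t]
  have "(\<Sum>y\<in>{1..K}. Dv (etaP K \<pi> y) (asym_softmax K (rep K q t) y))
     = (\<Sum>y\<in>{1..K}. Dv (etaP K \<pi> y) ((etaP K \<pi> y + asym_softmax K v y) / 2))"
  proof (intro sum.cong refl)
    fix y assume "y \<in> {1..K}"
    then have eq: "asym_softmax K (rep K q t) y = q y" using R by blast
    have qy: "q y = (etaP K \<pi> y + asym_softmax K v y) / 2" unfolding q_def by (simp add: add.commute)
    then show "Dv (etaP K \<pi> y) (asym_softmax K (rep K q t) y) = Dv (etaP K \<pi> y) ((etaP K \<pi> y + asym_softmax K v y) / 2)"
      by (simp only: eq qy)
  qed
  also have "\<dots> \<le> (\<Sum>y\<in>{1..K}. Dv (etaP K \<pi> y) (asym_softmax K v y) / 2)"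
    using eta_nonneg sm_pos[OF K] by (intro sum_mono Dv_half) auto
  also have "\<dots> = (\<Sum>y\<in>{1..K}. Dv (etaP K \<pi> y) (asym_softmax K v y)) / 2"
    by (simp add: sum_divide_distrib)
  finally have A: "(\<Sum>y\<in>{1..K}. Dv (etaP K \<pi> y) (asym_softmax K (rep K q t) y))
     \<le> (\<Sum>y\<in>{1..K}. Dv (etaP K \<pi> y) (asym_softmax K v y)) / 2" .
  have "Dv (1 - ppP K \<pi>) (1 - t) = Dv (1 - ppP K \<pi>) ((1 - ppP K \<pi> + (1 - asym_softmax K v (K+1))) / 2)"
    unfolding t_def by (simp add: field_simps)
  also have "\<dots> \<le> Dv (1 - ppP K \<pi>) (1 - asym_softmax K v (K+1)) / 2"
    using pp_le1[OF supp] sm_last_lt1[OF K, of v] by (intro Dv_half) auto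
  finally have B: "Dv (1 - ppP K \<pi>) (1 - t) \<le> Dv (1 - ppP K \<pi>) (1 - asym_softmax K v (K+1)) / 2" .
  have "Dv (ppP K \<pi>) t = Dv (ppP K \<pi>) ((ppP K \<pi> + asym_softmax K v (K+1)) / 2)"
    unfolding t_def by (simp add: add.commute)
  also have "\<dots> \<le> Dv (ppP K \<pi>) (asym_softmax K v (K+1)) / 2"
    using pp_nonneg sm_last_pos[OF K, of v] by (intro Dv_half) auto
  finally have C: "Dv (ppP K \<pi>) t \<le> Dv (ppP K \<pi>) (asym_softmax K v (K+1)) / 2" .
  show ?thesis unfolding DsP_def using A B C R by simp
qed

lemma nn_pmf_fin:
  fixes \<pi> :: "(nat \<times> nat) pmf" and f :: "nat \<times> nat \<Rightarrow> real"
  assumes supp: "set_pmf \<pi> \<subseteq> {1..K} \<times> {1..K}"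
    and nn: "\<And>y m. y \<in> {1..K} \<Longrightarrow> m \<in> {1..K} \<Longrightarrow> 0 \<le> f (y, m)"
  shows "(\<integral>\<^sup>+z. ennreal (f z) \<partial>measure_pmf \<pi>) = ennreal (\<Sum>y\<in>{1..K}. \<Sum>m\<in>{1..K}. pmf \<pi> (y, m) * f (y, m))"
proof -
  have "(\<integral>\<^sup>+z. ennreal (f z) \<partial>measure_pmf \<pi>) = (\<Sum>z\<in>{1..K} \<times> {1..K}. ennreal (f z) * pmf \<pi> z)"
    using supp by (intro nn_integral_measure_pmf_support) (auto intro: finite_SigmaI)
  also have "\<dots> = (\<Sum>z\<in>{1..K} \<times> {1..K}. ennreal (pmf \<pi> z * f z))"
    using nn by (intro sum.cong refl) (auto simp: ennreal_mult mult.commute)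
  also have "\<dots> = ennreal (\<Sum>z\<in>{1..K} \<times> {1..K}. pmf \<pi> z * f z)"
    using nn by (intro sum_ennreal) auto
  finally show ?thesis by (simp add: sum.cartesian_product)
qed

lemma cr_nn:
  assumes K: "K > 1" and supp: "set_pmf \<pi> \<subseteq> {1..K} \<times> {1..K}"
  shows "(\<integral>\<^sup>+z. ennreal (surr_loss K v (fst z) (snd z)) \<partial>measure_pmf \<pi>) = ennreal (crP K \<pi> v)"
  using nn_pmf_fin[OF supp, of "\<lambda>z. surr_loss K v (fst z) (snd z)"] loss_nonneg[OF K]
  unfolding crP_def by simp

lemma crP_nonneg:
  assumes K: "K > 1" shows "0 \<le> crP K \<pi> v"
  unfolding crP_def using loss_nonneg[OF K] by (intro sum_nonneg mult_nonneg_nonneg) auto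

lemma prob_sum:
  fixes \<pi> :: "(nat \<times> nat) pmf"
  assumes supp: "set_pmf \<pi> \<subseteq> {1..K} \<times> {1..K}"
  shows "measure_pmf.prob \<pi> B = (\<Sum>y\<in>{1..K}. \<Sum>m\<in>{1..K}. pmf \<pi> (y, m) * indicator B (y, m))"
proof -
  have "ennreal (measure_pmf.prob \<pi> B) = emeasure (measure_pmf \<pi>) B"
    by (simp add: measure_pmf.emeasure_eq_measure)
  also have "\<dots> = (\<integral>\<^sup>+z. ennreal (indicator B z) \<partial>measure_pmf \<pi>)"
    by (simp add: ennreal_indicator nn_integral_indicator)
  also have "\<dots> = ennreal (\<Sum>y\<in>{1..K}. \<Sum>m\<in>{1..K}. pmf \<pi> (y, m) * indicator B (y, m))"
    by (rule nn_pmf_fin[OF supp]) auto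
  finally show ?thesis
    by (subst (asm) ennreal_inj) (auto intro!: sum_nonneg)
qed

lemma target_eq:
  assumes supp: "set_pmf (D x) \<subseteq> {1..K} \<times> {1..K}"
  shows "i \<in> {1..K} \<Longrightarrow> target K D x i = etaP K (D x) i"
    and "target K D x (K+1) = ppP K (D x)"
proof -
  assume i: "i \<in> {1..K}"
  have "target K D x i = (\<Sum>y\<in>{1..K}. \<Sum>m\<in>{1..K}. pmf (D x) (y, m) * indicator {(y, m). y = i} (y, m))"
    using i unfolding target_def prob_sum[OF supp] by simp
  also have "\<dots> = (\<Sum>y\<in>{1..K}. \<Sum>m\<in>{1..K}. pmf (D x) (y, m) * of_bool (y = i))"
    by (intro sum.cong refl) (auto simp: indicator_def)
  also have "\<dots> = (\<Sum>y\<in>{1..K}. of_bool (y = i) * etaP K (D x) y)"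
    unfolding etaP_def by (intro sum.cong refl) (simp add: sum_distrib_right mult.commute)
  also have "\<dots> = (\<Sum>y\<in>{1..K}. if y = i then etaP K (D x) y else 0)"
    by (intro sum.cong refl) simp
  also have "\<dots> = etaP K (D x) i" using i by simp
  finally show "target K D x i = etaP K (D x) i" .
next
  have "target K D x (K+1) = (\<Sum>y\<in>{1..K}. \<Sum>m\<in>{1..K}. pmf (D x) (y, m) * indicator {(y, m). m = y} (y, m))"
    unfolding target_def prob_sum[OF supp] by simp
  also have "\<dots> = (\<Sum>y\<in>{1..K}. \<Sum>m\<in>{1..K}. pmf (D x) (y, m) * of_bool (m = y))"
    by (intro sum.cong refl) (auto simp: indicator_def)
  finally show "target K D x (K+1) = ppP K (D x)" using diag_sum by simp
qed

lemma fc2: fixes e M d :: real assumes "0 < e" "e \<le> M" "0 < d" shows "e / (e + d) \<le> M / (M + d)"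
proof -
  have "e * d \<le> M * d" using assms by (intro mult_right_mono) auto
  then have "e * (M + d) \<le> M * (e + d)" by (simp add: algebra_simps)
  then show ?thesis using assms by (simp add: divide_simps)
qed

lemma fc1: fixes a e M d :: real assumes "0 < a" "a \<le> M" "M \<le> e" "0 < d" shows "a / (M + d) \<le> e / (e + d)"
proof -
  have "a / (M + d) \<le> M / (M + d)" using assms by (intro divide_right_mono) auto
  also have "\<dots> \<le> e / (e + d)" using assms by (intro fc2) auto
  finally show ?thesis .
qed

definition val01 :: "nat \<Rightarrow> (nat \<times> nat) pmf \<Rightarrow> nat option \<Rightarrow> real" where
  "val01 K \<pi> d0 = (case d0 of None \<Rightarrow> 1 - ppP K \<pi> | Some y \<Rightarrow> 1 - etaP K \<pi> y)"

lemma cr01: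
  assumes supp: "set_pmf \<pi> \<subseteq> {1..K} \<times> {1..K}" and d0: "d0 \<in> insert None (Some ` {1..K})"
  shows "(\<integral>\<^sup>+z. ennreal (loss01_defer d0 (fst z) (snd z)) \<partial>measure_pmf \<pi>) = ennreal (val01 K \<pi> d0)"
proof -
  have "(\<integral>\<^sup>+z. ennreal (loss01_defer d0 (fst z) (snd z)) \<partial>measure_pmf \<pi>)
      = ennreal (\<Sum>y\<in>{1..K}. \<Sum>m\<in>{1..K}. pmf \<pi> (y, m) * loss01_defer d0 y m)"
    using nn_pmf_fin[OF supp, of "\<lambda>z. loss01_defer d0 (fst z) (snd z)"] by (simp add: loss01_defer_def)
  also have "(\<Sum>y\<in>{1..K}. \<Sum>m\<in>{1..K}. pmf \<pi> (y, m) * loss01_defer d0 y m) = val01 K \<pi> d0"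
  proof (cases d0)
    case None
    have "(\<Sum>y\<in>{1..K}. \<Sum>m\<in>{1..K}. pmf \<pi> (y, m) * loss01_defer d0 y m)
       = (\<Sum>y\<in>{1..K}. \<Sum>m\<in>{1..K}. pmf \<pi> (y, m) * of_bool (m \<noteq> y))"
      using None by (intro sum.cong refl) (auto simp: loss01_defer_def)
    then show ?thesis using offdiag_sum[OF supp] None by (simp add: val01_def)
  next
    case (Some y0)
    have "(\<Sum>y\<in>{1..K}. \<Sum>m\<in>{1..K}. pmf \<pi> (y, m) * loss01_defer d0 y m)
       = (\<Sum>y\<in>{1..K}. \<Sum>m\<in>{1..K}. pmf \<pi> (y, m) - pmf \<pi> (y, m) * of_bool (y = y0))"
      using Some by (intro sum.cong refl) (auto simp: loss01_defer_def)
    also have "\<dots> = 1 - (\<Sum>y\<in>{1..K}. \<Sum>m\<in>{1..K}. pmf \<pi> (y, m) * of_bool (y = y0))"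
      using pmf_tot[OF supp] by (simp add: sum_subtractf)
    also have "(\<Sum>y\<in>{1..K}. \<Sum>m\<in>{1..K}. pmf \<pi> (y, m) * of_bool (y = y0))
        = (\<Sum>y\<in>{1..K}. if y = y0 then etaP K \<pi> y else 0)"
      unfolding etaP_def by (intro sum.cong refl) (simp add: sum_distrib_right[symmetric])
    also have "\<dots> = (if y0 \<in> {1..K} then etaP K \<pi> y0 else 0)" by simp
    finally show ?thesis using Some d0 by (auto simp: val01_def)
  qed
  finally show ?thesis .
qed

lemma max_exp:
  fixes v :: "nat \<Rightarrow> real"
  assumes "y0 \<in> {1..K}" "\<forall>y\<in>{1..K}. v y \<le> v y0"
  shows "Max ((\<lambda>y. exp (v y)) ` {1..K}) = exp (v y0)"
  using assms by (intro Max_eqI) auto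

lemma decide_opt:
  fixes v :: "nat \<Rightarrow> real"
  assumes K: "K > 1" and hs: "\<forall>y\<in>{1..K}. asym_softmax K v y = etaP K \<pi> y"
    and hp: "asym_softmax K v (K+1) = ppP K \<pi>" and d0: "d0 \<in> insert None (Some ` {1..K})"
  shows "defer_decision K v \<in> insert None (Some ` {1..K}) \<and> val01 K \<pi> (defer_decision K v) \<le> val01 K \<pi> d0"
proof -
  define S where "S = (\<Sum>y\<in>{1..K}. exp (v y))"
  define M where "M = Max ((\<lambda>y. exp (v y)) ` {1..K})"
  define e where "e = exp (v (K+1))"
  define d where "d = S - M"
  have dpos: "0 < d" unfolding d_def S_def M_def by (rule S_minus_M_pos[OF K])
  have SM: "S = M + d" unfolding d_def by simp
  have sy: "\<And>y. y \<in> {1..K} \<Longrightarrow> asym_softmax K v y = exp (v y) / (M + d)"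
    unfolding asym_softmax_def SM[symmetric] S_def by simp
  have sK: "asym_softmax K v (K+1) = e / (e + d)" unfolding sm_last_eq e_def d_def S_def M_def ..
  have ne: "v ` {1..K} \<noteq> {}" using K by auto
  obtain y0 where y0: "y0 \<in> {1..K}" "v y0 = Max (v ` {1..K})" using Max_in[OF _ ne] by fastforce
  have y0max: "\<forall>y\<in>{1..K}. v y \<le> v y0" using y0 by simp
  show ?thesis
  proof (cases "v (K+1) > Max (v ` {1..K})")
    case True
    then have dd: "defer_decision K v = None" by (simp add: defer_decision_def)
    have M0: "M = exp (v y0)" unfolding M_def by (rule max_exp[OF y0(1) y0max])
    have "e > M" using True y0 M0 e_def by simp
    have le: "etaP K \<pi> y \<le> ppP K \<pi>" if y: "y \<in> {1..K}" for y
    proof -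
      have "exp (v y) \<le> M" using y0max y M0 by simp
      then have "exp (v y) / (M + d) \<le> e / (e + d)" using \<open>e > M\<close> dpos by (intro fc1) auto
      then show ?thesis using hs hp sy sK y by metis
    qed
    show ?thesis using dd d0 le by (auto simp: val01_def)
  next
    case False
    define ys where "ys = (LEAST y. y \<in> {1..K} \<and> (\<forall>y'\<in>{1..K}. v y' \<le> v y))"
    have dd: "defer_decision K v = Some ys" using False by (simp add: defer_decision_def ys_def)
    have ys: "ys \<in> {1..K} \<and> (\<forall>y'\<in>{1..K}. v y' \<le> v ys)"
      unfolding ys_def by (rule LeastI_ex) (use y0 y0max in blast)
    have M0: "M = exp (v ys)" unfolding M_def using ys by (intro max_exp) auto
    have "Max (v ` {1..K}) \<le> v ys" using ys by simp
    then have "e \<le> M" using False M0 e_def by simp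
    have l1: "ppP K \<pi> \<le> etaP K \<pi> ys"
    proof -
      have "e / (e + d) \<le> M / (M + d)" using \<open>e \<le> M\<close> dpos e_def by (intro fc2) auto
      then show ?thesis using hs hp sy sK ys M0 by metis
    qed
    have l2: "etaP K \<pi> y \<le> etaP K \<pi> ys" if y: "y \<in> {1..K}" for y
    proof -
      have "exp (v y) / (M + d) \<le> exp (v ys) / (M + d)" using ys y dpos M0
        by (intro divide_right_mono) auto
      then show ?thesis using hs sy ys y by metis
    qed
    show ?thesis using dd d0 ys l1 l2 by (auto simp: val01_def)
  qed
qed

lemma bm_exp: "f \<in> borel_measurable M \<Longrightarrow> (\<lambda>x. exp (f x :: real)) \<in> borel_measurable M"
  using measurable_compose[OF _ borel_measurable_exp] by blast

lemma bm_Dv: "f \<in> borel_measurable M \<Longrightarrow> g \<in> borel_measurable M \<Longrightarrow> (\<lambda>x. Dv (f x) (g x)) \<in> borel_measurable M"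
  unfolding Dv_def by (intro borel_measurable_add borel_measurable_diff borel_measurable_times borel_measurable_ln) auto

lemma sm_meas:
  assumes ms: "meas_score K \<mu> g"
  shows "(\<lambda>x. asym_softmax K (g x) i) \<in> borel_measurable \<mu>"
proof -
  have gm: "\<And>i. i \<in> {1..K+1} \<Longrightarrow> (\<lambda>x. g x i) \<in> borel_measurable \<mu>"
    using ms unfolding meas_score_def by blast
  have em: "\<And>i. i \<in> {1..K+1} \<Longrightarrow> (\<lambda>x. exp (g x i)) \<in> borel_measurable \<mu>"
    using gm bm_exp by blast
  have S: "(\<lambda>x. \<Sum>y\<in>{1..K}. exp (g x y)) \<in> borel_measurable \<mu>"
    using em by (intro borel_measurable_sum) auto
  have S1: "(\<lambda>x. \<Sum>y\<in>{1..K+1}. exp (g x y)) \<in> borel_measurable \<mu>"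
    using em by (intro borel_measurable_sum) auto
  have Mx: "(\<lambda>x. Max ((\<lambda>y. exp (g x y)) ` {1..K})) \<in> borel_measurable \<mu>"
    using borel_measurable_Max[of "{1..K}" "\<lambda>y x. exp (g x y)" \<mu>] em by auto
  show ?thesis
  proof (cases "i \<in> {1..K}")
    case True
    then show ?thesis unfolding asym_softmax_def using em S by (simp add: borel_measurable_divide)
  next
    case False
    show ?thesis
    proof (cases "i = K + 1")
      case True
      then show ?thesis unfolding asym_softmax_def using False em[of "K+1"] S1 Mx
        by (simp add: borel_measurable_divide borel_measurable_diff)
    next
      case False2: False
      have "\<forall>v. asym_softmax K v i = 0" using False False2 unfolding asym_softmax_def by auto
      then show ?thesis by simp
    qed
  qed
qed

lemma pmf_meas:
  assumes "valid_dist K \<mu> D"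
  shows "(\<lambda>x. pmf (D x) z) \<in> borel_measurable \<mu>"
  using assms unfolding valid_dist_def by (cases z) auto

lemma eta_meas: "valid_dist K \<mu> D \<Longrightarrow> (\<lambda>x. etaP K (D x) y) \<in> borel_measurable \<mu>"
  unfolding etaP_def by (intro borel_measurable_sum pmf_meas) auto

lemma pp_meas: "valid_dist K \<mu> D \<Longrightarrow> (\<lambda>x. ppP K (D x)) \<in> borel_measurable \<mu>"
  unfolding ppP_def by (intro borel_measurable_sum pmf_meas) auto

lemma loss_meas:
  assumes "meas_score K \<mu> g"
  shows "(\<lambda>x. surr_loss K (g x) y m) \<in> borel_measurable \<mu>"
  unfolding surr_loss_def using sm_meas[OF assms]
  by (intro borel_measurable_diff borel_measurable_times borel_measurable_ln borel_measurable_uminus) auto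

lemma crP_meas:
  assumes "valid_dist K \<mu> D" "meas_score K \<mu> g"
  shows "(\<lambda>x. crP K (D x) (g x)) \<in> borel_measurable \<mu>"
  unfolding crP_def using pmf_meas[OF assms(1)] loss_meas[OF assms(2)]
  by (intro borel_measurable_sum borel_measurable_times) auto

lemma DsP_meas:
  assumes "valid_dist K \<mu> D" "meas_score K \<mu> g"
  shows "(\<lambda>x. DsP K (D x) (g x)) \<in> borel_measurable \<mu>"
  unfolding DsP_def using eta_meas[OF assms(1)] pp_meas[OF assms(1)] sm_meas[OF assms(2)]
  by (intro borel_measurable_add borel_measurable_sum bm_Dv borel_measurable_diff) auto

lemma rep_meas:
  assumes q: "\<And>y. (\<lambda>x. q x y) \<in> borel_measurable \<mu>" and t: "t \<in> borel_measurable \<mu>"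
  shows "meas_score K \<mu> (\<lambda>x. rep K (q x) (t x))"
proof -
  have Mx: "(\<lambda>x. Max ((\<lambda>y. q x y) ` {1..K})) \<in> borel_measurable \<mu>"
    using borel_measurable_Max[of "{1..K}" "\<lambda>y x. q x y" \<mu>] q by auto
  have "(\<lambda>x. rep K (q x) (t x) i) \<in> borel_measurable \<mu>" for i
  proof (cases "i = K + 1")
    case True
    then show ?thesis unfolding rep_def using Mx t
      by (simp add: borel_measurable_ln borel_measurable_divide borel_measurable_times borel_measurable_diff)
  next
    case False
    then show ?thesis unfolding rep_def using q by (simp add: borel_measurable_ln)
  qed
  then show ?thesis unfolding meas_score_def by blast
qed

lemma risk_eq:
  assumes K: "K > 1" and valid: "valid_dist K \<mu> D"
  shows "surr_risk K \<mu> D f = (\<integral>\<^sup>+x. ennreal (crP K (D x) (f x)) \<partial>\<mu>)"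
proof -
  have supp: "\<And>x. set_pmf (D x) \<subseteq> {1..K} \<times> {1..K}" using valid unfolding valid_dist_def by blast
  show ?thesis unfolding surr_risk_def using cr_nn[OF K supp] by simp
qed

lemma crP_bound:
  assumes K: "K > 1" and supp: "set_pmf \<pi> \<subseteq> {1..K} \<times> {1..K}"
  shows "crP K \<pi> v \<le> (\<Sum>y\<in>{1..K}. \<Sum>m\<in>{1..K}. surr_loss K v y m)"
  unfolding crP_def using loss_nonneg[OF K] pmf_le_1
  by (intro sum_mono mult_left_le_one_le) auto

lemma part2:
  assumes K: "K > 1" and valid: "valid_dist K \<mu> D" and gmin: "surr_minimizer K \<mu> D g"
  shows "AE x in \<mu>. DsP K (D x) (g x) = 0"
proof (rule ccontr)
  assume nAE: "\<not> (AE x in \<mu>. DsP K (D x) (g x) = 0)"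
  have supp: "\<And>x. set_pmf (D x) \<subseteq> {1..K} \<times> {1..K}" using valid unfolding valid_dist_def by blast
  have ps: "prob_space \<mu>" using valid unfolding valid_dist_def by blast
  have gms: "meas_score K \<mu> g" using gmin unfolding surr_minimizer_def by blast
  have gle: "\<And>h. meas_score K \<mu> h \<Longrightarrow> surr_risk K \<mu> D g \<le> surr_risk K \<mu> D h"
    using gmin unfolding surr_minimizer_def by blast
  define B where "B = (\<Sum>y\<in>{1..K}. \<Sum>m\<in>{1..K}. surr_loss K (\<lambda>i. 0) y m)"
  have "surr_risk K \<mu> D g \<le> surr_risk K \<mu> D (\<lambda>x i. 0)"
    by (rule gle) (simp add: meas_score_def)
  also have "\<dots> \<le> (\<integral>\<^sup>+x. ennreal B \<partial>\<mu>)"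
    unfolding risk_eq[OF K valid] B_def using crP_bound[OF K supp]
    by (intro nn_integral_mono ennreal_leI) auto
  also have "\<dots> = ennreal B" using prob_space.emeasure_space_1[OF ps] by simp
  finally have fin: "surr_risk K \<mu> D g < \<top>" by (simp add: order_le_less_trans)
  define q where "q = (\<lambda>x y. (asym_softmax K (g x) y + etaP K (D x) y) / 2)"
  define t where "t = (\<lambda>x. (asym_softmax K (g x) (K+1) + ppP K (D x)) / 2)"
  define h where "h = (\<lambda>x. rep K (q x) (t x))"
  have hms: "meas_score K \<mu> h" unfolding h_def
    by (rule rep_meas) (auto simp: q_def t_def intro!: borel_measurable_divide borel_measurable_add
        sm_meas[OF gms] eta_meas[OF valid] pp_meas[OF valid])
  have dh: "DsP K (D x) (h x) \<le> DsP K (D x) (g x) / 2" for x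
    unfolding h_def q_def t_def by (rule improve[OF K supp])
  have cg: "crP K (D x) (g x) = CstP K (D x) + DsP K (D x) (g x)" for x by (rule decomp[OF K supp])
  have ch: "crP K (D x) (h x) = CstP K (D x) + DsP K (D x) (h x)" for x by (rule decomp[OF K supp])
  have pw: "ennreal (crP K (D x) (h x)) + ennreal (DsP K (D x) (g x) / 2) \<le> ennreal (crP K (D x) (g x))" for x
  proof -
    have "crP K (D x) (h x) + DsP K (D x) (g x) / 2 \<le> crP K (D x) (g x)" using cg ch dh[of x] by simp
    moreover have "ennreal (crP K (D x) (h x)) + ennreal (DsP K (D x) (g x) / 2)
        = ennreal (crP K (D x) (h x) + DsP K (D x) (g x) / 2)"
      using crP_nonneg[OF K, of "D x" "h x"] DsP_nonneg[OF K supp, of x "g x"] by simp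
    ultimately show ?thesis by (simp add: ennreal_leI)
  qed
  have mg: "(\<lambda>x. DsP K (D x) (g x) / 2) \<in> borel_measurable \<mu>"
    using DsP_meas[OF valid gms] by simp
  have P: "(\<integral>\<^sup>+x. ennreal (DsP K (D x) (g x) / 2) \<partial>\<mu>) \<noteq> 0"
  proof
    assume "(\<integral>\<^sup>+x. ennreal (DsP K (D x) (g x) / 2) \<partial>\<mu>) = 0"
    then have "AE x in \<mu>. ennreal (DsP K (D x) (g x) / 2) = 0"
      using mg by (subst (asm) nn_integral_0_iff_AE) auto
    then have "AE x in \<mu>. DsP K (D x) (g x) = 0"
    proof (rule AE_mp[OF _ AE_I2], intro impI)
      fix x assume "ennreal (DsP K (D x) (g x) / 2) = 0"
      then have "DsP K (D x) (g x) \<le> 0" by (simp add: ennreal_eq_0_iff)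
      then show "DsP K (D x) (g x) = 0" using DsP_nonneg[OF K supp, of x "g x"] by linarith
    qed
    then show False using nAE by simp
  qed
  have "surr_risk K \<mu> D h + (\<integral>\<^sup>+x. ennreal (DsP K (D x) (g x) / 2) \<partial>\<mu>)
      = (\<integral>\<^sup>+x. ennreal (crP K (D x) (h x)) + ennreal (DsP K (D x) (g x) / 2) \<partial>\<mu>)"
    unfolding risk_eq[OF K valid] using crP_meas[OF valid hms] mg
    by (subst nn_integral_add) auto
  also have "\<dots> \<le> surr_risk K \<mu> D g"
    unfolding risk_eq[OF K valid] using pw by (intro nn_integral_mono) auto
  finally have le1: "surr_risk K \<mu> D h + (\<integral>\<^sup>+x. ennreal (DsP K (D x) (g x) / 2) \<partial>\<mu>) \<le> surr_risk K \<mu> D g" .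
  have "surr_risk K \<mu> D h \<le> surr_risk K \<mu> D g"
    using le1 by (rule order_trans[rotated]) simp
  then have hfin: "surr_risk K \<mu> D h \<noteq> \<infinity>" using fin by auto
  have "surr_risk K \<mu> D h + (\<integral>\<^sup>+x. ennreal (DsP K (D x) (g x) / 2) \<partial>\<mu>) \<le> surr_risk K \<mu> D h + 0"
    using order_trans[OF le1 gle[OF hms]] by (simp only: add_0_right)
  then have "(\<integral>\<^sup>+x. ennreal (DsP K (D x) (g x) / 2) \<partial>\<mu>) \<le> 0"
    using hfin ennreal_add_left_cancel_le by blast
  then show False using P by simp
qed

lemma exists_pi:
  fixes u :: "nat \<Rightarrow> real"
  assumes K: "K > 1"
  shows "\<exists>\<pi>. set_pmf \<pi> \<subseteq> {1..K} \<times> {1..K} \<and> (\<forall>y\<in>{1..K}. asym_softmax K u y = etaP K \<pi> y)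
     \<and> asym_softmax K u (K+1) = ppP K \<pi>"
proof -
  define q where "q = asym_softmax K u"
  define t where "t = asym_softmax K u (K+1)"
  define oth where "oth = (\<lambda>y::nat. if y = 1 then 2 else (1::nat))"
  define w where "w = (\<lambda>z::nat \<times> nat. if fst z \<in> {1..K} \<and> snd z \<in> {1..K}
     then q (fst z) * ((if snd z = fst z then t else 0) + (if snd z = oth (fst z) then 1 - t else 0)) else 0)"
  have qpos: "\<And>y. y \<in> {1..K} \<Longrightarrow> 0 < q y" unfolding q_def by (rule sm_pos[OF K])
  have t: "0 < t" "t < 1" unfolding t_def using sm_last_pos[OF K] sm_last_lt1[OF K] by auto
  have oth: "\<And>y. y \<in> {1..K} \<Longrightarrow> oth y \<in> {1..K} \<and> oth y \<noteq> y" unfolding oth_def using K by auto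
  have wnn: "\<And>z. 0 \<le> w z" unfolding w_def using qpos t by (auto intro!: mult_nonneg_nonneg less_imp_le)
  have inner: "\<And>y. y \<in> {1..K} \<Longrightarrow> (\<Sum>m\<in>{1..K}. w (y, m)) = q y"
  proof -
    fix y :: nat assume y: "y \<in> {1..K}"
    have "(\<Sum>m\<in>{1..K}. w (y, m)) = (\<Sum>m\<in>{1..K}. q y * ((if m = y then t else 0) + (if m = oth y then 1 - t else 0)))"
      using y unfolding w_def by (intro sum.cong refl) auto
    also have "\<dots> = q y * ((\<Sum>m\<in>{1..K}. if m = y then t else 0) + (\<Sum>m\<in>{1..K}. if m = oth y then 1 - t else 0))"
      by (simp add: sum_distrib_left[symmetric] sum.distrib)
    also have "\<dots> = q y" using y oth[OF y] by simp
    finally show "(\<Sum>m\<in>{1..K}. w (y, m)) = q y" .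
  qed
  have wsum: "(\<Sum>z\<in>{1..K} \<times> {1..K}. w z) = 1"
  proof -
    have "(\<Sum>z\<in>{1..K} \<times> {1..K}. w z) = (\<Sum>y\<in>{1..K}. \<Sum>m\<in>{1..K}. w (y, m))"
      by (simp add: sum.cartesian_product)
    also have "\<dots> = (\<Sum>y\<in>{1..K}. q y)" using inner by simp
    also have "\<dots> = 1" unfolding q_def by (rule sm_sum[OF K])
    finally show ?thesis .
  qed
  have prob: "(\<integral>\<^sup>+z. ennreal (w z) \<partial>count_space UNIV) = 1"
  proof -
    have "(\<integral>\<^sup>+z. ennreal (w z) \<partial>count_space UNIV) = (\<Sum>z\<in>{1..K} \<times> {1..K}. ennreal (w z))"
      by (rule nn_integral_count_space') (auto simp: w_def intro: finite_SigmaI)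
    also have "\<dots> = ennreal (\<Sum>z\<in>{1..K} \<times> {1..K}. w z)" using wnn by (intro sum_ennreal) auto
    finally show ?thesis using wsum by simp
  qed
  define \<pi> where "\<pi> = embed_pmf w"
  have pw: "\<And>z. pmf \<pi> z = w z" unfolding \<pi>_def by (rule pmf_embed_pmf[OF wnn prob])
  have supp: "set_pmf \<pi> \<subseteq> {1..K} \<times> {1..K}"
    unfolding set_pmf_eq pw by (auto simp: w_def split: if_splits)
  have eta: "\<forall>y\<in>{1..K}. asym_softmax K u y = etaP K \<pi> y"
    unfolding etaP_def pw using inner q_def by simp
  have "ppP K \<pi> = (\<Sum>y\<in>{1..K}. q y * t)"
    unfolding ppP_def pw
  proof (intro sum.cong refl)
    fix y assume y: "y \<in> {1..K}"
    have "y \<noteq> oth y" using oth[OF y] by auto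
    then show "w (y, y) = q y * t" using y by (simp add: w_def)
  qed
  also have "\<dots> = t" using sm_sum[OF K, of u] unfolding q_def by (simp add: sum_distrib_right[symmetric])
  finally have "asym_softmax K u (K+1) = ppP K \<pi>" unfolding t_def by simp
  then show ?thesis using supp eta by blast
qed

lemma Dv_self: "Dv a a = 0" unfolding Dv_def by simp

theorem theorem2:
  fixes K :: nat and \<mu> :: "'x measure" and D :: "'x \<Rightarrow> (nat \<times> nat) pmf"
  assumes "K > 1" and "valid_dist K \<mu> D"
  shows "(\<forall>g. surr_minimizer K \<mu> D g \<longrightarrow>
            (\<forall>f. f \<in> measurable \<mu> (count_space UNIV)
                 \<and> (\<forall>x\<in>space \<mu>. f x \<in> insert None (Some ` {1..K})) \<longrightarrow>
                 risk01 \<mu> D (\<lambda>x. defer_decision K (g x)) \<le> risk01 \<mu> D f))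
       \<and> (\<forall>g. surr_minimizer K \<mu> D g \<longrightarrow>
            (AE x in \<mu>. \<forall>i\<in>{1..K+1}. asym_softmax K (g x) i = target K D x i))
       \<and> (\<forall>est. prob_estimator K \<mu> est \<longrightarrow> (\<exists>B. \<forall>u. \<forall>i\<in>{1..K+1}. \<bar>est u i\<bar> \<le> B))"
proof -
  note K = assms(1) and valid = assms(2)
  have supp: "\<And>x. set_pmf (D x) \<subseteq> {1..K} \<times> {1..K}" using valid unfolding valid_dist_def by blast
  have ps: "prob_space \<mu>" using valid unfolding valid_dist_def by blast
  have P2: "AE x in \<mu>. (\<forall>y\<in>{1..K}. asym_softmax K (g x) y = etaP K (D x) y)
      \<and> asym_softmax K (g x) (K+1) = ppP K (D x)" if gm: "surr_minimizer K \<mu> D g" for g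
    using part2[OF K valid gm] by eventually_elim (rule DsP_zero[OF K supp])
  have C2: "\<forall>g. surr_minimizer K \<mu> D g \<longrightarrow>
            (AE x in \<mu>. \<forall>i\<in>{1..K+1}. asym_softmax K (g x) i = target K D x i)"
  proof (intro allI impI)
    fix g assume gm: "surr_minimizer K \<mu> D g"
    show "AE x in \<mu>. \<forall>i\<in>{1..K+1}. asym_softmax K (g x) i = target K D x i"
      using P2[OF gm]
    proof eventually_elim
      case (elim x)
      show ?case
      proof
        fix i assume i: "i \<in> {1..K+1}"
        show "asym_softmax K (g x) i = target K D x i"
        proof (cases "i = K + 1")
          case True then show ?thesis using elim target_eq(2)[where D=D and K=K and x=x, OF supp] by simp
        next
          case False
          then have "i \<in> {1..K}" using i by auto
          then show ?thesis using elim target_eq(1)[where D=D and K=K and x=x, OF supp] by simp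
        qed
      qed
    qed
  qed
  have C1: "\<forall>g. surr_minimizer K \<mu> D g \<longrightarrow>
            (\<forall>f. f \<in> measurable \<mu> (count_space UNIV)
                 \<and> (\<forall>x\<in>space \<mu>. f x \<in> insert None (Some ` {1..K})) \<longrightarrow>
                 risk01 \<mu> D (\<lambda>x. defer_decision K (g x)) \<le> risk01 \<mu> D f)"
  proof (intro allI impI)
    fix g f assume gm: "surr_minimizer K \<mu> D g"
      and f: "f \<in> measurable \<mu> (count_space UNIV) \<and> (\<forall>x\<in>space \<mu>. f x \<in> insert None (Some ` {1..K}))"
    show "risk01 \<mu> D (\<lambda>x. defer_decision K (g x)) \<le> risk01 \<mu> D f"
      unfolding risk01_def
    proof (rule nn_integral_mono_AE)
      show "AE x in \<mu>. (\<integral>\<^sup>+ym. ennreal (loss01_defer (defer_decision K (g x)) (fst ym) (snd ym)) \<partial>measure_pmf (D x))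
          \<le> (\<integral>\<^sup>+ym. ennreal (loss01_defer (f x) (fst ym) (snd ym)) \<partial>measure_pmf (D x))"
        using P2[OF gm] AE_space
      proof eventually_elim
        case (elim x)
        have fx: "f x \<in> insert None (Some ` {1..K})" using f elim by blast
        note dec = decide_opt[OF K _ _ fx, of "g x" "D x"]
        have "defer_decision K (g x) \<in> insert None (Some ` {1..K})"
          and le: "val01 K (D x) (defer_decision K (g x)) \<le> val01 K (D x) (f x)"
          using dec elim by auto
        then show ?case using cr01[OF supp] fx by (simp add: ennreal_leI)
      qed
    qed
  qed
  have C3: "\<forall>est. prob_estimator K \<mu> est \<longrightarrow> (\<exists>B. \<forall>u. \<forall>i\<in>{1..K+1}. \<bar>est u i\<bar> \<le> B)"
  proof (intro allI impI)
    fix est assume pe: "prob_estimator K \<mu> est"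
    have "\<bar>est u i\<bar> \<le> 1" if i: "i \<in> {1..K+1}" for u i
    proof -
      obtain \<pi> where pi: "set_pmf \<pi> \<subseteq> {1..K} \<times> {1..K}" "\<forall>y\<in>{1..K}. asym_softmax K u y = etaP K \<pi> y"
          "asym_softmax K u (K+1) = ppP K \<pi>"
        using exists_pi[OF K, of u] by blast
      define D' where "D' = (\<lambda>x::'x. \<pi>)"
      have valid': "valid_dist K \<mu> D'" unfolding valid_dist_def D'_def using ps pi(1) by auto
      have ds0: "DsP K \<pi> u = 0" unfolding DsP_def using pi(2,3) by (simp add: Dv_self)
      have gmin: "surr_minimizer K \<mu> D' (\<lambda>x. u)"
        unfolding surr_minimizer_def
      proof (intro conjI allI impI)
        show "meas_score K \<mu> (\<lambda>x. u)" by (simp add: meas_score_def)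
        fix h assume "meas_score K \<mu> h"
        show "surr_risk K \<mu> D' (\<lambda>x. u) \<le> surr_risk K \<mu> D' h"
        proof -
          have "crP K (D' x) u \<le> crP K (D' x) (h x)" for x
            using decomp[OF K pi(1)] ds0 DsP_nonneg[OF K pi(1), of "h x"] by (simp add: D'_def)
          then show ?thesis unfolding risk_eq[OF K valid'] by (intro nn_integral_mono ennreal_leI)
        qed
      qed
      have AE1: "AE x in \<mu>. \<forall>i\<in>{1..K+1}. est u i = target K D' x i"
        using pe valid' gmin unfolding prob_estimator_def by auto
      have tc: "target K D' x j = target K D' undefined j" for x j
        by (simp add: target_def D'_def)
      have "AE x in \<mu>. \<forall>i\<in>{1..K+1}. est u i = target K D' undefined i"
        using AE1 by (rule AE_mp) (intro AE_I2 impI, metis tc)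
      then have "\<forall>i\<in>{1..K+1}. est u i = target K D' undefined i"
        using prob_space.AE_const[OF ps] by simp
      then have ei: "est u i = target K D' undefined i" using i by blast
      have supp': "set_pmf (D' undefined) \<subseteq> {1..K} \<times> {1..K}" using pi(1) D'_def by simp
      show ?thesis
      proof (cases "i = K + 1")
        case True
        then have "est u i = asym_softmax K u (K+1)" using ei target_eq(2)[where D=D' and K=K and x=undefined, OF supp'] pi(3) D'_def by simp
        then show ?thesis using sm_last_pos[OF K, of u] sm_last_lt1[OF K, of u] by simp
      next
        case False
        then have iK: "i \<in> {1..K}" using i by auto
        then have "est u i = asym_softmax K u i" using ei target_eq(1)[where D=D' and K=K and x=undefined, OF supp'] pi(2) D'_def by simp
        then show ?thesis using sm_pos[OF K iK, of u] sm_le1[OF K iK, of u] by simp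
      qed
    qed
    then show "\<exists>B. \<forall>u. \<forall>i\<in>{1..K+1}. \<bar>est u i\<bar> \<le> B" by blast
  qed
  show ?thesis using C1 C2 C3 by blast
qed

end
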